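(* Let $G$, $P$, $w$ be as in the context, with all edge costs positive integer multiples of $\delta>0$, where $\delta$ is the largest number dividing all edge costs. Let $s\neq t$ with at least one directed path from $s$ to $t$, let $d_s$ be the number of out-neighbours of $s$, and let $0<\alpha<1$ be such that $\epsilon_{st}(\alpha)=U_s^{\{t,\overline o\}}(\alpha)-L_{st}<\delta/d_s$. Then any out-neighbour $j$ of $s$ maximizing $\check P_{sj}(\alpha)$ over all out-neighbours of $s$ satisfies that the edge $e_{sj}$ lies on a shortest (minimum-cost) path from $s$ to $t$.
   Context: $G=(V,E)$ is a finite directed graph; each edge $e_{ij}\in E$ has a positive cost $w_{ij}$; $P$ is a row-stochastic transition matrix with $P_{ij}>0$ iff $e_{ij}\in E$. $L_{st}$ is the minimum total cost of a directed path from $s$ to $t$. Evaporating network $G_\alpha$: Markov chain on $V\cup\{o\}$ with $P_{ij}(\alpha)=P_{ij}\alpha^{w_{ij}}$ ($i,j\in V$), $P_{io}(\alpha)=1-\sum_jP_{ij}\alpha^{w_{ij}}$, $o$ absorbing. With $t,o$ absorbing and $\mathcal T=V\setminus\{t\}$: $Q_x=Q_x^{\{t,\overline o\}}(\alpha)$ is the probability the chain from $x$ is absorbed at $t$ ($Q_t=1$); $F(\alpha)=(I-P(\alpha)_{\mathcal T\mathcal T})^{-1}$; $F^{\{t,\overline o\}}_{sm}(\alpha)=F_{sm}(\alpha)Q_m/Q_s$; the avoidance hitting cost is $U_s^{\{t,\overline o\}}(\alpha)=\sum_{m\in\mathcal T}F^{\{t,\overline o\}}_{sm}(\alpha)r_m$,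 $r_m=\sum_iP_{mi}(\alpha)w_{mi}Q_i/Q_m$ (the expected walk cost from $s$ conditioned on absorption at $t$). Transformed edge probabilities: $\check P_{ij}(\alpha)=P_{ij}(\alpha)\,Q_j/Q_i$. *)

theory Defs
  imports "HOL-Analysis.Analysis"
begin

text \<open>Vertices: a finite type 'v (V = UNIV). The sink o is implicit (defective row mass).
  P :: transition matrix, w :: edge costs.\<close>

definition Pev :: "('v \<Rightarrow> 'v \<Rightarrow> real) \<Rightarrow> ('v \<Rightarrow> 'v \<Rightarrow> real) \<Rightarrow> real \<Rightarrow> 'v \<Rightarrow> 'v \<Rightarrow> real" where
  "Pev P w \<alpha> i j = P i j * \<alpha> powr (w i j)"

text \<open>Fundamental matrix F(alpha) = (I - P(alpha)_TT)^{-1}, T = V - {t}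
  (entries outside T x T set to 0).\<close>
definition Fmat :: "('v::finite \<Rightarrow> 'v \<Rightarrow> real) \<Rightarrow> ('v \<Rightarrow> 'v \<Rightarrow> real) \<Rightarrow> 'v \<Rightarrow> real \<Rightarrow> 'v \<Rightarrow> 'v \<Rightarrow> real" where
  "Fmat P w t \<alpha> = (THE F. (\<forall>x y. (x = t \<or> y = t) \<longrightarrow> F x y = 0) \<and>
      (\<forall>x\<in>-{t}. \<forall>y\<in>-{t}.
         (\<Sum>k\<in>-{t}. ((if x = k then 1 else 0) - Pev P w \<alpha> x k) * F k y) = (if x = y then 1 else 0)))"

text \<open>Absorption probability at t (t, o absorbing): Q_t = 1, Q_x = sum_m F_xm P_mt(alpha).\<close>
definition Qabs :: "('v::finite \<Rightarrow> 'v \<Rightarrow> real) \<Rightarrow> ('v \<Rightarrow> 'v \<Rightarrow> real) \<Rightarrow> 'v \<Rightarrow> real \<Rightarrow> 'v \<Rightarrow> real" where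
  "Qabs P w t \<alpha> x = (if x = t then 1 else (\<Sum>m\<in>-{t}. Fmat P w t \<alpha> x m * Pev P w \<alpha> m t))"

definition Fcond :: "('v::finite \<Rightarrow> 'v \<Rightarrow> real) \<Rightarrow> ('v \<Rightarrow> 'v \<Rightarrow> real) \<Rightarrow> 'v \<Rightarrow> real \<Rightarrow> 'v \<Rightarrow> 'v \<Rightarrow> real" where
  "Fcond P w t \<alpha> s m = Fmat P w t \<alpha> s m * Qabs P w t \<alpha> m / Qabs P w t \<alpha> s"

definition rcost :: "('v::finite \<Rightarrow> 'v \<Rightarrow> real) \<Rightarrow> ('v \<Rightarrow> 'v \<Rightarrow> real) \<Rightarrow> 'v \<Rightarrow> real \<Rightarrow> 'v \<Rightarrow> real" where
  "rcost P w t \<alpha> m = (\<Sum>i\<in>UNIV. Pev P w \<alpha> m i * w m i * Qabs P w t \<alpha> i / Qabs P w t \<alpha> m)"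

definition Uavoid :: "('v::finite \<Rightarrow> 'v \<Rightarrow> real) \<Rightarrow> ('v \<Rightarrow> 'v \<Rightarrow> real) \<Rightarrow> 'v \<Rightarrow> real \<Rightarrow> 'v \<Rightarrow> real" where
  "Uavoid P w t \<alpha> s = (\<Sum>m\<in>-{t}. Fcond P w t \<alpha> s m * rcost P w t \<alpha> m)"

definition Pcheck :: "('v::finite \<Rightarrow> 'v \<Rightarrow> real) \<Rightarrow> ('v \<Rightarrow> 'v \<Rightarrow> real) \<Rightarrow> 'v \<Rightarrow> real \<Rightarrow> 'v \<Rightarrow> 'v \<Rightarrow> real" where
  "Pcheck P w t \<alpha> i j = Pev P w \<alpha> i j * Qabs P w t \<alpha> j / Qabs P w t \<alpha> i"

definition is_path :: "('v \<times> 'v) set \<Rightarrow> 'v \<Rightarrow> 'v \<Rightarrow> 'v list \<Rightarrow> bool" where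
  "is_path E s t p \<longleftrightarrow> p \<noteq> [] \<and> hd p = s \<and> last p = t \<and>
     (\<forall>i < length p - 1. (p ! i, p ! (i + 1)) \<in> E)"

definition path_cost :: "('v \<Rightarrow> 'v \<Rightarrow> real) \<Rightarrow> 'v list \<Rightarrow> real" where
  "path_cost w p = (\<Sum>i < length p - 1. w (p ! i) (p ! (i + 1)))"

definition Lmin :: "('v \<times> 'v) set \<Rightarrow> ('v \<Rightarrow> 'v \<Rightarrow> real) \<Rightarrow> 'v \<Rightarrow> 'v \<Rightarrow> real" where
  "Lmin E w s t = Inf (path_cost w ` {p. is_path E s t p})"

end

theory Submission
  imports Defs
begin


lemma minp:
  fixes a :: "'v \<Rightarrow> 'v \<Rightarrow> real" and g :: "'v \<Rightarrow> real"
  assumes fin: "finite S"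
    and anon: "\<And>x k. 0 \<le> a x k"
    and row: "\<And>x. x \<in> S \<Longrightarrow> (\<Sum>k\<in>S. a x k) < 1"
    and sup: "\<And>x. x \<in> S \<Longrightarrow> (\<Sum>k\<in>S. a x k * g k) \<le> g x"
    and xS: "x \<in> S"
  shows "0 \<le> g x"
proof (rule ccontr)
  assume neg: "\<not> 0 \<le> g x"
  have "Min (g ` S) \<in> g ` S" using fin xS by (intro Min_in) auto
  then obtain x0 where x0S: "x0 \<in> S" and x0m: "g x0 = Min (g ` S)" by auto
  have x0: "x0 \<in> S" "\<And>y. y \<in> S \<Longrightarrow> g x0 \<le> g y"
    using x0S x0m fin by auto
  have gm: "g x0 < 0" using x0(2)[OF xS] neg by simp
  have "(\<Sum>k\<in>S. a x0 k * g x0) \<le> (\<Sum>k\<in>S. a x0 k * g k)"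
    by (rule sum_mono) (simp add: anon mult_left_mono x0(2))
  also have "\<dots> \<le> g x0" using sup[OF x0(1)] .
  finally have "(\<Sum>k\<in>S. a x0 k) * g x0 \<le> g x0" by (simp add: sum_distrib_right)
  moreover have "(\<Sum>k\<in>S. a x0 k) * g x0 > 1 * g x0"
    using row[OF x0(1)] gm by (intro mult_strict_right_mono_neg) auto
  ultimately show False by simp
qed

locale setting =
  fixes E :: "('v::finite \<times> 'v) set" and P w :: "'v \<Rightarrow> 'v \<Rightarrow> real"
    and \<delta> \<alpha> :: real and t :: 'v
  assumes P_nonneg: "\<And>i j. P i j \<ge> 0"
    and P_stoch: "\<And>i. (\<Sum>j\<in>UNIV. P i j) = 1"
    and P_edge: "\<And>i j. P i j > 0 \<longleftrightarrow> (i, j) \<in> E"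
    and w_pos: "\<And>i j. (i, j) \<in> E \<Longrightarrow> w i j > 0"
    and delta_pos: "\<delta> > 0"
    and w_mult: "\<And>i j. (i, j) \<in> E \<Longrightarrow> \<exists>k::nat. k \<ge> 1 \<and> w i j = real k * \<delta>"
    and alpha0: "0 < \<alpha>" and alpha1: "\<alpha> < 1"
begin

abbreviation "pe \<equiv> Pev P w \<alpha>"
abbreviation "F \<equiv> Fmat P w t \<alpha>"
abbreviation "Q \<equiv> Qabs P w t \<alpha>"

lemma pe_nonneg: "0 \<le> pe i j"
  unfolding Pev_def using P_nonneg by simp

lemma pe_zero: "(i, j) \<notin> E \<Longrightarrow> pe i j = 0"
  unfolding Pev_def using P_nonneg P_edge by (metis less_eq_real_def mult_eq_0_iff)

lemma pe_edge: "pe i j \<noteq> 0 \<Longrightarrow> (i, j) \<in> E"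
  using pe_zero by blast

lemma pe_le: "pe i j \<le> P i j"
proof (cases "(i, j) \<in> E")
  case True
  then have "\<alpha> powr w i j < 1" using w_pos alpha0 alpha1 powr01_less_one by blast
  then show ?thesis unfolding Pev_def using P_nonneg
    by (simp add: mult_left_le)
next
  case False then show ?thesis using pe_zero P_nonneg by simp
qed

lemma pe_lt: "(i, j) \<in> E \<Longrightarrow> pe i j < P i j"
proof -
  assume e: "(i, j) \<in> E"
  then have "\<alpha> powr w i j < 1" using w_pos alpha0 alpha1 powr01_less_one by blast
  moreover have "P i j > 0" using e P_edge by blast
  ultimately show ?thesis unfolding Pev_def by simp
qed

lemma row_lt1: "(\<Sum>k\<in>S. pe i k) < 1"
proof -
  have "(\<Sum>k\<in>S. pe i k) \<le> (\<Sum>k\<in>UNIV. pe i k)"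
    by (rule sum_mono2) (auto simp: pe_nonneg)
  also have "\<dots> < (\<Sum>k\<in>UNIV. P i k)"
  proof (rule sum_strict_mono_ex1)
    show "\<exists>a\<in>UNIV. pe i a < P i a"
    proof (rule ccontr)
      assume "\<not> ?thesis"
      then have "\<forall>a. (i, a) \<notin> E" using pe_lt by auto
      then have "\<forall>a. P i a = 0" using P_edge P_nonneg by (metis less_eq_real_def)
      then show False using P_stoch[of i] by simp
    qed
  qed (auto simp: pe_le)
  finally show ?thesis using P_stoch by simp
qed

lemma uniq_aux:
  assumes "\<And>x. x \<in> -{t} \<Longrightarrow> (\<Sum>k\<in>-{t}. ((if x = k then 1 else 0) - pe x k) * d k) = 0"
    and "x \<in> -{t}"
  shows "d x = 0"
proof -
  have eq: "(\<Sum>k\<in>-{t}. pe x k * d k) = d x" if "x \<in> -{t}" for x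
  proof -
    have "(\<Sum>k\<in>-{t}. ((if x = k then 1 else 0) - pe x k) * d k)
        = (\<Sum>k\<in>-{t}. (if x = k then d k else 0)) - (\<Sum>k\<in>-{t}. pe x k * d k)"
      by (subst sum_subtractf[symmetric]) (rule sum.cong, auto simp: algebra_simps)
    also have "(\<Sum>k\<in>-{t}. (if x = k then d k else 0)) = d x" using that by simp
    finally show ?thesis using assms(1)[OF that] by simp
  qed
  have fin: "finite (-{t})" by simp
  have "0 \<le> d x"
    by (rule minp[where a = pe and S = "-{t}", OF fin pe_nonneg row_lt1 eq[THEN eq_refl] assms(2)])
  moreover have "0 \<le> (\<lambda>k. - d k) x"
  proof (rule minp[where a = pe and S = "-{t}", OF fin pe_nonneg row_lt1 _ assms(2)])
    fix y assume y: "y \<in> -{t}"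
    have "(\<Sum>k\<in>-{t}. pe y k * - d k) = - (\<Sum>k\<in>-{t}. pe y k * d k)"
      by (simp add: sum_negf[symmetric])
    then show "(\<Sum>k\<in>-{t}. pe y k * - d k) \<le> - d y" using eq[OF y] by simp
  qed
  ultimately show ?thesis by simp
qed

definition Mm :: "real^'v^'v" where
  "Mm = (\<chi> i k. if i = t then (if k = t then 1 else 0)
          else (if i = k then 1 else 0) - (if k = t then 0 else pe i k))"

lemma Mm_inj: "inj ((*v) Mm)"
proof -
  have "x = 0" if h: "Mm *v x = 0" for x
  proof -
    have c: "(\<Sum>k\<in>UNIV. Mm $ i $ k * x $ k) = 0" for i
      using arg_cong[OF h, of "\<lambda>v. v $ i"] by (simp add: matrix_vector_mult_def)
    have "Mm $ t $ k * x $ k = (if k = t then x $ k else 0)" for k by (simp add: Mm_def)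
    then have xt: "x $ t = 0" using c[of t] by simp
    have "x $ i = 0" if i: "i \<in> -{t}" for i
    proof -
     have "(\<Sum>k\<in>-{t}. ((if y = k then 1 else 0) - pe y k) * x $ k) = 0" if y: "y \<in> -{t}" for y
     proof -
      have "(\<Sum>k\<in>UNIV. Mm $ y $ k * x $ k) = Mm $ y $ t * x $ t + (\<Sum>k\<in>UNIV-{t}. Mm $ y $ k * x $ k)"
        by (rule sum.remove) auto
      also have "\<dots> = (\<Sum>k\<in>-{t}. ((if y = k then 1 else 0) - pe y k) * x $ k)"
      proof -
        have U: "UNIV - {t} = -{t}" by auto
        have M: "Mm $ y $ k * x $ k = ((if y = k then 1 else 0) - pe y k) * x $ k"
          if "k \<in> -{t}" for k using that y by (auto simp: Mm_def)
        have "Mm $ y $ t * x $ t + (\<Sum>k\<in>UNIV-{t}. Mm $ y $ k * x $ k) = (\<Sum>k\<in>-{t}. Mm $ y $ k * x $ k)"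
          by (simp only: U xt mult_zero_right add_0)
        also have "\<dots> = (\<Sum>k\<in>-{t}. ((if y = k then 1 else 0) - pe y k) * x $ k)"
          by (rule sum.cong[OF refl M])
        finally show ?thesis .
      qed
      finally show "(\<Sum>k\<in>-{t}. ((if y = k then 1 else 0) - pe y k) * x $ k) = 0" using c[of y] by simp
     qed
     then show ?thesis using uniq_aux[where d = "\<lambda>k. x $ k"] i by blast
    qed
    then show "x = 0" using xt unfolding vec_eq_iff by (metis ComplI singletonD zero_index)
  qed
  note main = this
  show ?thesis
  proof (rule injI)
    fix a b assume "Mm *v a = Mm *v b"
    then have "Mm *v (a - b) = 0" by (simp add: matrix_vector_mult_diff_distrib)
    then have "a - b = 0" by (rule main)
    then show "a = b" by simp
  qed
qed

lemma F_prop: "(\<forall>x y. (x = t \<or> y = t) \<longrightarrow> F x y = 0) \<and>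
      (\<forall>x\<in>-{t}. \<forall>y\<in>-{t}.
         (\<Sum>k\<in>-{t}. ((if x = k then 1 else 0) - pe x k) * F k y) = (if x = y then 1 else 0))"
proof -
  let ?R = "\<lambda>F. (\<forall>x y. (x = t \<or> y = t) \<longrightarrow> F x y = 0) \<and>
      (\<forall>x\<in>-{t}. \<forall>y\<in>-{t}.
         (\<Sum>k\<in>-{t}. ((if x = k then 1 else 0) - pe x k) * F k y) = (if x = y then 1 else (0::real)))"
  obtain B where B: "Mm ** B = mat 1"
    using Mm_inj matrix_left_invertible_injective matrix_left_right_inverse by blast
  define F0 where "F0 = (\<lambda>k y. if k = t \<or> y = t then 0 else B $ k $ y)"
  have ex: "?R F0"
  proof (intro conjI ballI allI impI)
    fix x y assume "x = t \<or> y = t" then show "F0 x y = 0" by (auto simp: F0_def)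
  next
    fix x y assume x: "x \<in> -{t}" and y: "y \<in> -{t}"
    have "(if x = y then 1 else 0) = (Mm ** B) $ x $ y" using B by (simp add: mat_def)
    also have "\<dots> = (\<Sum>k\<in>UNIV. Mm $ x $ k * B $ k $ y)" by (simp add: matrix_matrix_mult_def)
    also have "\<dots> = Mm $ x $ t * B $ t $ y + (\<Sum>k\<in>UNIV-{t}. Mm $ x $ k * B $ k $ y)"
      by (rule sum.remove) auto
    also have "\<dots> = (\<Sum>k\<in>-{t}. ((if x = k then 1 else 0) - pe x k) * F0 k y)"
    proof -
      have "Mm $ x $ t = 0" using x by (auto simp: Mm_def)
      moreover have "UNIV - {t} = -{t}" by auto
      moreover have "Mm $ x $ k * B $ k $ y = ((if x = k then 1 else 0) - pe x k) * F0 k y"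
        if "k \<in> -{t}" for k using that x y by (auto simp: Mm_def F0_def)
      ultimately show ?thesis by simp
    qed
    finally show "(\<Sum>k\<in>-{t}. ((if x = k then 1 else 0) - pe x k) * F0 k y) = (if x = y then 1 else 0)" by simp
  qed
  have un: "F1 = F0" if RF1: "?R F1" for F1
  proof (intro ext)
    fix k y
    show "F1 k y = F0 k y"
    proof (cases "k = t \<or> y = t")
      case True then show ?thesis using conjunct1[OF RF1] conjunct1[OF ex] by metis
    next
      case False
      have "(\<Sum>k\<in>-{t}. ((if x = k then 1 else 0) - pe x k) * (F1 k y - F0 k y)) = 0"
        if x: "x \<in> -{t}" for x
      proof -
        have "(\<Sum>k\<in>-{t}. ((if x = k then 1 else 0) - pe x k) * (F1 k y - F0 k y))
           = (\<Sum>k\<in>-{t}. ((if x = k then 1 else 0) - pe x k) * F1 k y) -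
             (\<Sum>k\<in>-{t}. ((if x = k then 1 else 0) - pe x k) * F0 k y)"
          by (simp only: sum_subtractf[symmetric] right_diff_distrib)
        also have "\<dots> = 0"
        proof -
          have yT: "y \<in> -{t}" using False by simp
          have "(\<Sum>k\<in>-{t}. ((if x = k then 1 else 0) - pe x k) * F1 k y) = (if x = y then 1 else 0)"
            using conjunct2[OF RF1, rule_format, OF x yT] .
          moreover have "(\<Sum>k\<in>-{t}. ((if x = k then 1 else 0) - pe x k) * F0 k y) = (if x = y then 1 else 0)"
            using conjunct2[OF ex, rule_format, OF x yT] .
          ultimately show ?thesis by simp
        qed
        finally show "(\<Sum>k\<in>-{t}. ((if x = k then 1 else 0) - pe x k) * (F1 k y - F0 k y)) = 0" .
      qed
      then show ?thesis using uniq_aux[where d = "\<lambda>k. F1 k y - F0 k y" and x = k] False by simp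
    qed
  qed
  have th: "?R (THE F. ?R F)"
    by (rule theI[of ?R F0, OF ex un])
  then show ?thesis unfolding Fmat_def by assumption
qed

end


context setting begin

definition reach :: "'v \<Rightarrow> bool" where "reach x = (\<exists>p. is_path E x t p)"

lemma path_cons:
  assumes q: "is_path E k t q" and e: "(x, k) \<in> E"
  shows "is_path E x t (x # q)" "path_cost w (x # q) = w x k + path_cost w q"
proof -
  have qne: "q \<noteq> []" and hq: "hd q = k" and lq: "last q = t"
    and qe: "\<And>i. i < length q - 1 \<Longrightarrow> (q ! i, q ! (i + 1)) \<in> E"
    using q unfolding is_path_def by auto
  have q0: "q ! 0 = k" using qne hq by (simp add: hd_conv_nth)
  show "is_path E x t (x # q)" unfolding is_path_def
  proof (intro conjI allI impI)
    show "last (x # q) = t" using qne lq by simp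
    fix i assume i: "i < length (x # q) - 1"
    show "((x # q) ! i, (x # q) ! (i + 1)) \<in> E"
    proof (cases i)
      case 0 then show ?thesis using e q0 by simp
    next
      case (Suc j) then show ?thesis using qe[of j] i by simp
    qed
  qed simp_all
  have len: "length (x # q) - 1 = Suc (length q - 1)" using qne by (cases q) auto
  show "path_cost w (x # q) = w x k + path_cost w q"
    unfolding path_cost_def len sum.lessThan_Suc_shift using q0 by simp
qed

lemma path_tail:
  assumes p: "is_path E x t (a # q)" and qne: "q \<noteq> []"
  shows "a = x" "is_path E (hd q) t q" "(x, hd q) \<in> E"
proof -
  have pe': "\<And>i. i < length q \<Longrightarrow> ((a # q) ! i, (a # q) ! (i + 1)) \<in> E"
    using p unfolding is_path_def by auto
  show ax: "a = x" using p unfolding is_path_def by simp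
  show "is_path E (hd q) t q" unfolding is_path_def
  proof (intro conjI allI impI)
    show "last q = t" using p qne unfolding is_path_def by simp
    fix i assume "i < length q - 1"
    then show "(q ! i, q ! (i + 1)) \<in> E" using pe'[of "Suc i"] by simp
  qed (use qne in simp_all)
  show "(x, hd q) \<in> E" using pe'[of 0] qne ax by (simp add: hd_conv_nth)
qed

lemma reach_t: "reach t"
  unfolding reach_def is_path_def by (rule exI[of _ "[t]"]) simp

lemma reach_step: "(x, k) \<in> E \<Longrightarrow> reach k \<Longrightarrow> reach x"
  unfolding reach_def using path_cons by blast

lemma pc_nonneg: "is_path E x t p \<Longrightarrow> 0 \<le> path_cost w p"
  unfolding path_cost_def is_path_def
  by (intro sum_nonneg) (auto intro: less_imp_le w_pos)

lemma pc_mult: assumes "is_path E x t p" shows "\<exists>n::nat. path_cost w p = real n * \<delta>"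
proof -
  define kf where "kf i = (SOME k::nat. w (p ! i) (p ! (i + 1)) = real k * \<delta>)" for i
  have "w (p ! i) (p ! (i + 1)) = real (kf i) * \<delta>" if "i < length p - 1" for i
  proof -
    have "(p ! i, p ! (i + 1)) \<in> E" using assms that unfolding is_path_def by auto
    then have "\<exists>k::nat. w (p ! i) (p ! (i + 1)) = real k * \<delta>" using w_mult by blast
    then show ?thesis unfolding kf_def by (rule someI_ex)
  qed
  then have "path_cost w p = (\<Sum>i<length p - 1. real (kf i) * \<delta>)"
    unfolding path_cost_def by (intro sum.cong) auto
  also have "\<dots> = real (\<Sum>i<length p - 1. kf i) * \<delta>"
    by (simp add: sum_distrib_right)
  finally show ?thesis by blast
qed

abbreviation "L x \<equiv> Lmin E w x t"

lemma L_props: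
  assumes "reach x"
  shows "\<exists>p. is_path E x t p \<and> path_cost w p = L x"
    and "\<exists>n::nat. L x = real n * \<delta>"
    and "\<And>p. is_path E x t p \<Longrightarrow> L x \<le> path_cost w p"
proof -
  let ?C = "path_cost w ` {p. is_path E x t p}"
  have ex: "\<exists>n::nat. real n * \<delta> \<in> ?C"
  proof -
    obtain p where p: "is_path E x t p" using assms reach_def by blast
    obtain n where "path_cost w p = real n * \<delta>" using pc_mult[OF p] by blast
    then show ?thesis using p by force
  qed
  define n0 where "n0 = (LEAST n::nat. real n * \<delta> \<in> ?C)"
  have n0C: "real n0 * \<delta> \<in> ?C" unfolding n0_def by (rule LeastI_ex[OF ex])
  have n0le: "real n0 * \<delta> \<le> c" if cC: "c \<in> ?C" for c
  proof -
    obtain p where p: "is_path E x t p" "c = path_cost w p" using cC by blast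
    obtain n where n: "path_cost w p = real n * \<delta>" using pc_mult[OF p(1)] by blast
    have "n0 \<le> n" unfolding n0_def by (rule Least_le) (use p n in force)
    then show ?thesis using p n delta_pos by (simp add: mult_right_mono)
  qed
  have Leq: "L x = real n0 * \<delta>" unfolding Lmin_def
    by (rule cInf_eq_minimum[OF n0C n0le])
  show "\<exists>n::nat. L x = real n * \<delta>" using Leq by blast
  show "\<exists>p. is_path E x t p \<and> path_cost w p = L x" using n0C Leq by force
  show "\<And>p. is_path E x t p \<Longrightarrow> L x \<le> path_cost w p" using n0le Leq by force
qed

lemma L_t: "L t = 0"
proof -
  have p: "is_path E t t [t]" unfolding is_path_def by simp
  have "L t \<le> 0" using L_props(3)[OF reach_t p] by (simp add: path_cost_def)
  moreover obtain q where "is_path E t t q" "path_cost w q = L t" using L_props(1)[OF reach_t] by blast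
  then have "0 \<le> L t" using pc_nonneg by metis
  ultimately show ?thesis by simp
qed

lemma L_step: "(x, k) \<in> E \<Longrightarrow> reach k \<Longrightarrow> L x \<le> w x k + L k"
proof -
  assume e: "(x, k) \<in> E" and r: "reach k"
  obtain q where q: "is_path E k t q" "path_cost w q = L k" using L_props(1)[OF r] by blast
  have "L x \<le> path_cost w (x # q)"
    using L_props(3)[OF reach_step[OF e r] path_cons(1)[OF q(1) e]] .
  then show ?thesis using path_cons(2)[OF q(1) e] q(2) by simp
qed

end


context setting begin

lemma sumUT: "(\<Sum>k\<in>UNIV. f k) = f t + (\<Sum>k\<in>-{t}. (f k :: real))"
proof -
  have "UNIV = insert t (-{t})" by auto
  then show ?thesis by (metis Compl_iff finite insertI1 sum.insert)
qed

lemma F_t: "F t m = 0" "F m t = 0"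
  using F_prop by auto

lemma h_eq:
  assumes x: "x \<in> -{t}"
  shows "(\<Sum>m\<in>-{t}. F x m * c m) = c x + (\<Sum>k\<in>-{t}. pe x k * (\<Sum>m\<in>-{t}. F k m * c m))"
proof -
  define H where "H k = (\<Sum>m\<in>-{t}. F k m * c m)" for k
  have "(\<Sum>k\<in>-{t}. ((if x = k then 1 else 0) - pe x k) * H k)
      = (\<Sum>k\<in>-{t}. \<Sum>m\<in>-{t}. ((if x = k then 1 else 0) - pe x k) * F k m * c m)"
    unfolding H_def by (simp add: sum_distrib_left mult.assoc)
  also have "\<dots> = (\<Sum>m\<in>-{t}. \<Sum>k\<in>-{t}. ((if x = k then 1 else 0) - pe x k) * F k m * c m)"
    by (rule sum.swap)
  also have "\<dots> = (\<Sum>m\<in>-{t}. (\<Sum>k\<in>-{t}. ((if x = k then 1 else 0) - pe x k) * F k m) * c m)"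
    by (simp add: sum_distrib_right)
  also have "\<dots> = (\<Sum>m\<in>-{t}. (if x = m then c m else 0))"
  proof (rule sum.cong[OF refl])
    fix m assume m: "m \<in> -{t}"
    show "(\<Sum>k\<in>-{t}. ((if x = k then 1 else 0) - pe x k) * F k m) * c m = (if x = m then c m else 0)"
      using conjunct2[OF F_prop, rule_format, OF x m] by simp
  qed
  also have "\<dots> = c x" using x by simp
  finally have A: "(\<Sum>k\<in>-{t}. ((if x = k then 1 else 0) - pe x k) * H k) = c x" .
  have "(\<Sum>k\<in>-{t}. ((if x = k then 1 else 0) - pe x k) * H k)
        = (\<Sum>k\<in>-{t}. (if x = k then H k else 0)) - (\<Sum>k\<in>-{t}. pe x k * H k)"
    by (subst sum_subtractf[symmetric]) (rule sum.cong, auto simp: algebra_simps)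
  also have "(\<Sum>k\<in>-{t}. (if x = k then H k else 0)) = H x" using x by simp
  finally show ?thesis using A unfolding H_def by simp
qed

lemma Q_t: "Q t = 1" by (simp add: Qabs_def)

lemma Q_T: "x \<noteq> t \<Longrightarrow> Q x = (\<Sum>m\<in>-{t}. F x m * pe m t)" by (simp add: Qabs_def)

lemma Q_rec: assumes "x \<noteq> t" shows "Q x = (\<Sum>k\<in>UNIV. pe x k * Q k)"
proof -
  have "Q x = pe x t + (\<Sum>k\<in>-{t}. pe x k * (\<Sum>m\<in>-{t}. F k m * pe m t))"
    using h_eq[of x "\<lambda>m. pe m t"] assms Q_T by simp
  also have "\<dots> = pe x t * Q t + (\<Sum>k\<in>-{t}. pe x k * Q k)"
    using Q_t Q_T by simp
  also have "\<dots> = (\<Sum>k\<in>UNIV. pe x k * Q k)" using sumUT[of "\<lambda>k. pe x k * Q k"] by simp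
  finally show ?thesis .
qed

lemma Q_nonneg: "0 \<le> Q x"
proof (cases "x = t")
  case True then show ?thesis using Q_t by simp
next
  case False
  show ?thesis
  proof (rule minp[where a = pe and S = "-{t}" and g = Q, OF _ pe_nonneg row_lt1])
    fix y assume y: "y \<in> -{t}"
    have "Q y = pe y t * Q t + (\<Sum>k\<in>-{t}. pe y k * Q k)"
      using Q_rec[of y] y sumUT[of "\<lambda>k. pe y k * Q k"] by simp
    then show "(\<Sum>k\<in>-{t}. pe y k * Q k) \<le> Q y" using Q_t pe_nonneg[of y t] by simp
  qed (use False in simp_all)
qed

lemma pe_pos: "(x, k) \<in> E \<Longrightarrow> 0 < pe x k"
  unfolding Pev_def using P_edge alpha0 by simp

lemma Q_pos_path: "is_path E x t p \<Longrightarrow> 0 < Q x"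
proof (induction p arbitrary: x)
  case Nil then show ?case by (simp add: is_path_def)
next
  case (Cons a q)
  show ?case
  proof (cases "q = []")
    case True
    then have "x = t" using Cons.prems unfolding is_path_def by (metis last_ConsL list.sel(1))
    then show ?thesis using Q_t by simp
  next
    case False
    note pt = path_tail[OF Cons.prems False]
    have Qk: "0 < Q (hd q)" using Cons.IH[OF pt(2)] .
    show ?thesis
    proof (cases "x = t")
      case True then show ?thesis using Q_t by simp
    next
      case xt: False
      have "pe x (hd q) * Q (hd q) \<le> (\<Sum>k\<in>UNIV. pe x k * Q k)"
        by (rule member_le_sum) (auto intro: mult_nonneg_nonneg pe_nonneg Q_nonneg)
      moreover have "0 < pe x (hd q) * Q (hd q)" using pe_pos[OF pt(3)] Qk by simp
      ultimately show ?thesis using Q_rec[OF xt] by simp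
    qed
  qed
qed

lemma Q_pos: "reach x \<Longrightarrow> 0 < Q x"
  unfolding reach_def using Q_pos_path by blast

lemma pe_unreach: "\<not> reach x \<Longrightarrow> reach k \<Longrightarrow> pe x k = 0"
  using reach_step pe_edge by blast

lemma Q_zero: assumes "\<not> reach x" shows "Q x = 0"
proof -
  let ?S = "{y. \<not> reach y}"
  have "0 \<le> (\<lambda>y. - Q y) x"
  proof (rule minp[where a = pe and S = ?S, OF _ pe_nonneg row_lt1])
    fix y assume y: "y \<in> ?S"
    then have yt: "y \<noteq> t" using reach_t by auto
    have "Q y = (\<Sum>k\<in>UNIV. pe y k * Q k)" using Q_rec[OF yt] .
    also have "\<dots> = (\<Sum>k\<in>?S. pe y k * Q k)"
      by (rule sum.mono_neutral_right) (use y pe_unreach in auto)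
    finally have "(\<Sum>k\<in>?S. pe y k * - Q k) = - Q y" by (simp add: sum_negf)
    then show "(\<Sum>k\<in>?S. pe y k * - Q k) \<le> - Q y" by simp
  qed (use assms in simp_all)
  then show ?thesis using Q_nonneg[of x] by simp
qed

definition cc :: "'v \<Rightarrow> real" where "cc m = (\<Sum>i\<in>UNIV. pe m i * w m i * Q i)"
definition hh :: "'v \<Rightarrow> real" where "hh x = (\<Sum>m\<in>-{t}. F x m * cc m)"

lemma hh_t: "hh t = 0" unfolding hh_def using F_t by simp

lemma hh_rec: assumes "x \<noteq> t" shows "hh x = (\<Sum>i\<in>UNIV. pe x i * (w x i * Q i + hh i))"
proof -
  have "hh x = cc x + (\<Sum>k\<in>-{t}. pe x k * hh k)"
    using h_eq[of x cc] assms unfolding hh_def by simp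
  also have "(\<Sum>k\<in>-{t}. pe x k * hh k) = (\<Sum>k\<in>UNIV. pe x k * hh k)"
    using sumUT[of "\<lambda>k. pe x k * hh k"] hh_t by simp
  finally show ?thesis unfolding cc_def by (simp add: sum.distrib algebra_simps)
qed

lemma cc_zero: "\<not> reach m \<Longrightarrow> cc m = 0"
  unfolding cc_def
proof (intro sum.neutral ballI)
  fix i assume r: "\<not> reach m"
  show "pe m i * w m i * Q i = 0"
  proof (cases "reach i")
    case True then show ?thesis using pe_unreach[OF r] by simp
  next
    case False then show ?thesis using Q_zero by simp
  qed
qed

definition gg :: "'v \<Rightarrow> real" where "gg x = hh x - L x * Q x"

lemma gg_t: "gg t = 0" unfolding gg_def using hh_t L_t by simp

lemma term_nonneg: "0 \<le> pe x i * Q i * (w x i + L i - L x)"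
proof (cases "pe x i = 0 \<or> Q i = 0")
  case True then show ?thesis by auto
next
  case False
  then have e: "(x, i) \<in> E" using pe_edge by blast
  have "reach i" using False Q_zero by blast
  then have "L x \<le> w x i + L i" using L_step[OF e] by simp
  then show ?thesis using pe_nonneg Q_nonneg by (simp add: mult_nonneg_nonneg)
qed

lemma gg_decomp: assumes "x \<noteq> t"
  shows "gg x = (\<Sum>i\<in>-{t}. pe x i * gg i) + (\<Sum>i\<in>UNIV. pe x i * Q i * (w x i + L i - L x))"
proof -
  have "gg x = (\<Sum>i\<in>UNIV. pe x i * (w x i * Q i + hh i)) - L x * (\<Sum>i\<in>UNIV. pe x i * Q i)"
    unfolding gg_def using hh_rec[OF assms] Q_rec[OF assms] by simp
  also have "\<dots> = (\<Sum>i\<in>UNIV. pe x i * gg i + pe x i * Q i * (w x i + L i - L x))"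
    unfolding gg_def by (simp add: sum_distrib_left sum_subtractf[symmetric] algebra_simps)
  also have "\<dots> = (\<Sum>i\<in>UNIV. pe x i * gg i) + (\<Sum>i\<in>UNIV. pe x i * Q i * (w x i + L i - L x))"
    by (rule sum.distrib)
  also have "(\<Sum>i\<in>UNIV. pe x i * gg i) = (\<Sum>i\<in>-{t}. pe x i * gg i)"
    using sumUT[of "\<lambda>i. pe x i * gg i"] gg_t by simp
  finally show ?thesis .
qed

lemma gg_nonneg: "0 \<le> gg x"
proof (cases "x = t")
  case True then show ?thesis using gg_t by simp
next
  case False
  show ?thesis
  proof (rule minp[where a = pe and S = "-{t}" and g = gg, OF _ pe_nonneg row_lt1])
    fix y assume y: "y \<in> -{t}"
    have "0 \<le> (\<Sum>i\<in>UNIV. pe y i * Q i * (w y i + L i - L y))"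
      by (rule sum_nonneg) (rule term_nonneg)
    then show "(\<Sum>k\<in>-{t}. pe y k * gg k) \<le> gg y" using gg_decomp[of y] y by simp
  qed (use False in simp_all)
qed

end


theorem mainTheorem7:
  fixes E :: "('v::finite \<times> 'v) set"
    and P w :: "'v \<Rightarrow> 'v \<Rightarrow> real"
    and \<delta> \<alpha> :: real and s t j :: 'v
  assumes P_nonneg: "\<And>i j. P i j \<ge> 0"
    and P_stoch: "\<And>i. (\<Sum>j\<in>UNIV. P i j) = 1"
    and P_edge: "\<And>i j. P i j > 0 \<longleftrightarrow> (i, j) \<in> E"
    and w_pos: "\<And>i j. (i, j) \<in> E \<Longrightarrow> w i j > 0"
    and delta_pos: "\<delta> > 0"
    and w_mult: "\<And>i j. (i, j) \<in> E \<Longrightarrow> \<exists>k::nat. k \<ge> 1 \<and> w i j = real k * \<delta>"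
    and delta_max: "\<And>\<delta>'. \<delta>' > 0 \<Longrightarrow> (\<forall>i j. (i, j) \<in> E \<longrightarrow> (\<exists>k::nat. w i j = real k * \<delta>')) \<Longrightarrow> \<delta>' \<le> \<delta>"
    and st: "s \<noteq> t"
    and reach: "\<exists>p. is_path E s t p"
    and alpha: "0 < \<alpha>" "\<alpha> < 1"
    and eps: "Uavoid P w t \<alpha> s - Lmin E w s t < \<delta> / real (card {k. (s, k) \<in> E})"
    and j_nb: "(s, j) \<in> E"
    and j_max: "\<And>k. (s, k) \<in> E \<Longrightarrow> Pcheck P w t \<alpha> s k \<le> Pcheck P w t \<alpha> s j"
  shows "\<exists>p. is_path E s t p \<and> path_cost w p = Lmin E w s t \<and>
           length p \<ge> 2 \<and> p ! 1 = j"
proof -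
  interpret S: setting E P w \<delta> \<alpha> t
    by (unfold_locales) (use assms in auto)
  let ?pe = "Pev P w \<alpha>"
  let ?Q = "Qabs P w t \<alpha>"
  let ?N = "{k. (s, k) \<in> E}"
  have rs: "S.reach s" using reach unfolding S.reach_def .
  have Qs: "0 < ?Q s" using S.Q_pos[OF rs] .
  have finN: "finite ?N" by simp
  have cardN: "0 < card ?N" using j_nb finN card_gt_0_iff by blast
  have pc: "Pcheck P w t \<alpha> s k = ?pe s k * ?Q k / ?Q s" for k by (simp add: Pcheck_def)
  have sumN: "(\<Sum>k\<in>?N. Pcheck P w t \<alpha> s k) = 1"
  proof -
    have "(\<Sum>k\<in>?N. ?pe s k * ?Q k) = (\<Sum>k\<in>UNIV. ?pe s k * ?Q k)"
      by (rule sum.mono_neutral_left) (use S.pe_zero in auto)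
    also have "\<dots> = ?Q s" using S.Q_rec[OF st] by simp
    finally show ?thesis unfolding pc using Qs by (simp add: sum_divide_distrib[symmetric])
  qed
  have "1 \<le> (\<Sum>k\<in>?N. Pcheck P w t \<alpha> s j)"
    unfolding sumN[symmetric] by (rule sum_mono) (use j_max in auto)
  then have pcj: "1 \<le> real (card ?N) * Pcheck P w t \<alpha> s j" by simp
  have pcj_pos: "0 < Pcheck P w t \<alpha> s j"
  proof (rule ccontr)
    assume "\<not> 0 < Pcheck P w t \<alpha> s j"
    then have "real (card ?N) * Pcheck P w t \<alpha> s j \<le> 0" by (simp add: mult_nonneg_nonpos)
    then show False using pcj by simp
  qed
  have pcj2: "\<delta> / real (card ?N) \<le> Pcheck P w t \<alpha> s j * \<delta>"
    using pcj cardN delta_pos by (simp add: field_simps)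
  have Qj: "?Q j \<noteq> 0"
  proof
    assume "?Q j = 0"
    then have "Pcheck P w t \<alpha> s j = 0" unfolding pc by simp
    then show False using pcj_pos by simp
  qed
  then have rj: "S.reach j" using S.Q_zero by blast
  obtain q where q: "is_path E j t q" "path_cost w q = S.L j" using S.L_props(1)[OF rj] by blast
  have qne: "q \<noteq> []" using q(1) unfolding is_path_def by simp
  have p1: "is_path E s t (s # q)" using S.path_cons(1)[OF q(1) j_nb] .
  have p2: "path_cost w (s # q) = w s j + S.L j" using S.path_cons(2)[OF q(1) j_nb] q(2) by simp
  have len: "length (s # q) \<ge> 2" using qne by (cases q) auto
  have "hd q = j" using q(1) unfolding is_path_def by simp
  then have nth1: "(s # q) ! 1 = j" using qne by (simp add: hd_conv_nth)
  show ?thesis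
  proof (cases "w s j + S.L j = S.L s")
    case True then show ?thesis using p1 p2 len nth1 by metis
  next
    case False
    have le: "S.L s \<le> w s j + S.L j" using S.L_step[OF j_nb rj] .
    obtain n1 where n1: "w s j = real n1 * \<delta>" using w_mult[OF j_nb] by blast
    obtain n2 where n2: "S.L j = real n2 * \<delta>" using S.L_props(2)[OF rj] by blast
    obtain n3 where n3: "S.L s = real n3 * \<delta>" using S.L_props(2)[OF rs] by blast
    have "real n3 < real n1 + real n2"
      using le False n1 n2 n3 delta_pos by (simp add: distrib_right[symmetric])
    then have "n3 + 1 \<le> n1 + n2" by linarith
    then have "real n3 + 1 \<le> real n1 + real n2" by linarith
    then have "1 * \<delta> \<le> (real n1 + real n2 - real n3) * \<delta>"
      using delta_pos by (intro mult_right_mono) auto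
    moreover have "w s j + S.L j - S.L s = (real n1 + real n2 - real n3) * \<delta>"
      unfolding n1 n2 n3 by (simp add: algebra_simps)
    ultimately have gap: "\<delta> \<le> w s j + S.L j - S.L s" by simp
    have "?pe s j * ?Q j * \<delta> \<le> ?pe s j * ?Q j * (w s j + S.L j - S.L s)"
      using gap S.pe_nonneg S.Q_nonneg by (intro mult_left_mono) auto
    also have "\<dots> \<le> (\<Sum>i\<in>UNIV. ?pe s i * ?Q i * (w s i + S.L i - S.L s))"
      by (rule member_le_sum) (auto intro: S.term_nonneg)
    also have "\<dots> \<le> S.gg s"
    proof -
      have "0 \<le> (\<Sum>i\<in>-{t}. ?pe s i * S.gg i)"
        by (rule sum_nonneg) (simp add: S.pe_nonneg S.gg_nonneg)
      then show ?thesis using S.gg_decomp[OF st] by simp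
    qed
    finally have A: "?pe s j * ?Q j * \<delta> \<le> S.hh s - S.L s * ?Q s" unfolding S.gg_def .
    have U: "Uavoid P w t \<alpha> s = S.hh s / ?Q s"
    proof -
      have "Uavoid P w t \<alpha> s = (\<Sum>m\<in>-{t}. Fmat P w t \<alpha> s m * S.cc m / ?Q s)"
        unfolding Uavoid_def
      proof (rule sum.cong[OF refl])
        fix m
        show "Fcond P w t \<alpha> s m * rcost P w t \<alpha> m = Fmat P w t \<alpha> s m * S.cc m / ?Q s"
        proof (cases "?Q m = 0")
          case True
          then have "\<not> S.reach m" using S.Q_pos by force
          then show ?thesis using True S.cc_zero by (simp add: Fcond_def)
        next
          case False
          have "rcost P w t \<alpha> m = S.cc m / ?Q m"
            unfolding rcost_def S.cc_def by (simp add: sum_divide_distrib)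
          then show ?thesis using False by (simp add: Fcond_def)
        qed
      qed
      also have "\<dots> = S.hh s / ?Q s" unfolding S.hh_def by (simp add: sum_divide_distrib)
      finally show ?thesis .
    qed
    have "Pcheck P w t \<alpha> s j * \<delta> \<le> Uavoid P w t \<alpha> s - S.L s"
    proof -
      have "Pcheck P w t \<alpha> s j * \<delta> = ?pe s j * ?Q j * \<delta> / ?Q s" unfolding pc by simp
      also have "\<dots> \<le> (S.hh s - S.L s * ?Q s) / ?Q s"
        using A Qs by (simp add: divide_right_mono)
      also have "\<dots> = Uavoid P w t \<alpha> s - S.L s" unfolding U using Qs by (simp add: field_simps)
      finally show ?thesis .
    qed
    then show ?thesis using pcj2 eps by linarith
  qed
qed


end
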